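(* For every hereditary graph class $\mathscr{C}$ of bounded shrubdepth there exists a first-order sentence $\varphi_{\mathscr{C}}$ (over the signature of graphs with one binary adjacency relation) such that for every graph $G$, $G\in\mathscr{C}$ if and only if $G\models\varphi_{\mathscr{C}}$.
   Context: All graphs are finite, simple, undirected. A class is hereditary if closed under taking induced subgraphs. A tree-model of a graph $G$ consists of a finite label set $\Lambda$, a labelling $\lambda:V(G)\to\Lambda$, a rooted tree $T$ with leaf set $V(G)$, and for each non-leaf node $t$ a symmetric $M_t:\Lambda\times\Lambda\to\{0,1\}$, such that distinct $u,v$ are adjacent iff $M_t(\lambda(u),\lambda(v))=1$ for $t$ the lowest common ancestor of $u,v$ in $T$. A class $\mathscr{C}$ has bounded shrubdepth if there are $d,m\in\mathbb{N}$ such that every graph of $\mathscr{C}$ has a tree-model of depth at most $d$ using at most $m$ labels. *)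

theory Defs
  imports Main
begin

type_synonym 'a graph = "'a set \<times> ('a \<Rightarrow> 'a \<Rightarrow> bool)"

definition verts :: "'a graph \<Rightarrow> 'a set" where
  "verts G = fst G"

definition adj :: "'a graph \<Rightarrow> 'a \<Rightarrow> 'a \<Rightarrow> bool" where
  "adj G = snd G"

definition graph :: "'a graph \<Rightarrow> bool" where
  "graph G \<longleftrightarrow> finite (verts G) \<and>
     (\<forall>u v. adj G u v \<longrightarrow> u \<in> verts G \<and> v \<in> verts G \<and> u \<noteq> v \<and> adj G v u)"

definition induced_subgraph :: "'a graph \<Rightarrow> 'a graph \<Rightarrow> bool" where
  "induced_subgraph H G \<longleftrightarrow> verts H \<subseteq> verts G \<and>
     adj H = (\<lambda>u v. u \<in> verts H \<and> v \<in> verts H \<and> adj G u v)"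

definition graph_iso :: "('a \<Rightarrow> 'b) \<Rightarrow> 'a graph \<Rightarrow> 'b graph \<Rightarrow> bool" where
  "graph_iso f G H \<longleftrightarrow> bij_betw f (verts G) (verts H) \<and>
     (\<forall>u\<in>verts G. \<forall>v\<in>verts G. adj G u v \<longleftrightarrow> adj H (f u) (f v))"

definition hereditary :: "nat graph set \<Rightarrow> bool" where
  "hereditary C \<longleftrightarrow> (\<forall>G\<in>C. graph G) \<and>
     (\<forall>G H f. G \<in> C \<and> graph H \<and> graph_iso f G H \<longrightarrow> H \<in> C) \<and>
     (\<forall>G H. G \<in> C \<and> induced_subgraph H G \<longrightarrow> H \<in> C)"

definition rooted_tree :: "'n set \<Rightarrow> 'n \<Rightarrow> ('n \<Rightarrow> 'n) \<Rightarrow> bool" where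
  "rooted_tree N r p \<longleftrightarrow> finite N \<and> r \<in> N \<and>
     (\<forall>x\<in>N. x \<noteq> r \<longrightarrow> p x \<in> N) \<and>
     (\<forall>x\<in>N. \<exists>k. (p ^^ k) x = r)"

definition node_depth :: "'n \<Rightarrow> ('n \<Rightarrow> 'n) \<Rightarrow> 'n \<Rightarrow> nat" where
  "node_depth r p x = (LEAST k. (p ^^ k) x = r)"

definition ancestors :: "'n \<Rightarrow> ('n \<Rightarrow> 'n) \<Rightarrow> 'n \<Rightarrow> 'n set" where
  "ancestors r p x = {(p ^^ k) x | k. k \<le> node_depth r p x}"

definition children :: "'n set \<Rightarrow> 'n \<Rightarrow> ('n \<Rightarrow> 'n) \<Rightarrow> 'n \<Rightarrow> 'n set" where
  "children N r p t = {x \<in> N. x \<noteq> r \<and> p x = t}"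

definition is_leaf :: "'n set \<Rightarrow> 'n \<Rightarrow> ('n \<Rightarrow> 'n) \<Rightarrow> 'n \<Rightarrow> bool" where
  "is_leaf N r p t \<longleftrightarrow> t \<in> N \<and> children N r p t = {}"

definition lca :: "'n \<Rightarrow> ('n \<Rightarrow> 'n) \<Rightarrow> 'n \<Rightarrow> 'n \<Rightarrow> 'n" where
  "lca r p x y = (THE z. z \<in> ancestors r p x \<inter> ancestors r p y \<and>
     (\<forall>w \<in> ancestors r p x \<inter> ancestors r p y. node_depth r p w \<le> node_depth r p z))"

text \<open>Leaves of the tree are the
  nodes Inl v for v a vertex; internal nodes are Inr i. Labels are natural numbers from a
  finite label set Lam; M t is the symmetric 0/1 matrix (as a bool-valued function) at node t.\<close>
definition has_tree_model :: "'a graph \<Rightarrow> nat \<Rightarrow> nat \<Rightarrow> bool" where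
  "has_tree_model G d m \<longleftrightarrow>
     (\<exists>(N :: ('a + nat) set) r p (Lam :: nat set) (lab :: 'a \<Rightarrow> nat)
        (M :: ('a + nat) \<Rightarrow> nat \<Rightarrow> nat \<Rightarrow> bool).
        rooted_tree N r p \<and>
        {t \<in> N. is_leaf N r p t} = Inl ` verts G \<and>
        (\<forall>x\<in>N. node_depth r p x \<le> d) \<and>
        finite Lam \<and> card Lam \<le> m \<and>
        (\<forall>v\<in>verts G. lab v \<in> Lam) \<and>
        (\<forall>t\<in>N. \<not> is_leaf N r p t \<longrightarrow> (\<forall>a\<in>Lam. \<forall>b\<in>Lam. M t a b = M t b a)) \<and>
        (\<forall>u\<in>verts G. \<forall>v\<in>verts G. u \<noteq> v \<longrightarrow>
           (adj G u v \<longleftrightarrow> M (lca r p (Inl u) (Inl v)) (lab u) (lab v))))"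

text \<open>Bounded shrubdepth; the (vertexless) empty graph has no tree (a tree has a node, hence
  a leaf), so it is exempted.\<close>
definition bounded_shrubdepth :: "nat graph set \<Rightarrow> bool" where
  "bounded_shrubdepth C \<longleftrightarrow>
     (\<exists>d m. \<forall>G\<in>C. verts G \<noteq> {} \<longrightarrow> has_tree_model G d m)"

datatype fo =
    FAdj nat nat
  | FEq nat nat
  | FNot fo
  | FAnd fo fo
  | FEx nat fo

fun fv :: "fo \<Rightarrow> nat set" where
  "fv (FAdj x y) = {x, y}"
| "fv (FEq x y) = {x, y}"
| "fv (FNot \<phi>) = fv \<phi>"
| "fv (FAnd \<phi> \<psi>) = fv \<phi> \<union> fv \<psi>"
| "fv (FEx x \<phi>) = fv \<phi> - {x}"

definition sentence :: "fo \<Rightarrow> bool" where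
  "sentence \<phi> \<longleftrightarrow> fv \<phi> = {}"

fun sat :: "'a graph \<Rightarrow> (nat \<Rightarrow> 'a) \<Rightarrow> fo \<Rightarrow> bool" where
  "sat G \<rho> (FAdj x y) = adj G (\<rho> x) (\<rho> y)"
| "sat G \<rho> (FEq x y) = (\<rho> x = \<rho> y)"
| "sat G \<rho> (FNot \<phi>) = (\<not> sat G \<rho> \<phi>)"
| "sat G \<rho> (FAnd \<phi> \<psi>) = (sat G \<rho> \<phi> \<and> sat G \<rho> \<psi>)"
| "sat G \<rho> (FEx x \<phi>) = (\<exists>a\<in>verts G. sat G (\<rho>(x := a)) \<phi>)"

text \<open>G models a sentence (the assignment is irrelevant for sentences).\<close>
definition models :: "'a graph \<Rightarrow> fo \<Rightarrow> bool" where
  "models G \<phi> \<longleftrightarrow> (\<forall>\<rho>. sat G \<rho> \<phi>)"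

end

theory Submission
  imports Defs "HOL-Library.Ramsey" "HOL-Library.Infinite_Set"
begin


definition wqoo :: "('a \<Rightarrow> 'a \<Rightarrow> bool) \<Rightarrow> 'a set \<Rightarrow> bool" where
  "wqoo R Q \<longleftrightarrow> (\<forall>f::nat\<Rightarrow>'a. (\<forall>i. f i \<in> Q) \<longrightarrow> (\<exists>i j. i < j \<and> R (f i) (f j)))"

lemma wqooD: "wqoo R Q \<Longrightarrow> (\<And>i::nat. f i \<in> Q) \<Longrightarrow> \<exists>i j. i < j \<and> R (f i) (f j)"
  unfolding wqoo_def by blast

lemma wqo_chain:
  assumes w: "wqoo R Q" and f: "\<And>i::nat. f i \<in> Q"
  shows "\<exists>e::nat\<Rightarrow>nat. strict_mono e \<and> (\<forall>k l. k < l \<longrightarrow> R (f (e k)) (f (e l)))"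
proof -
  define c where "c X = (if R (f (Min X)) (f (Max X)) then 0 else (1::nat))" for X :: "nat set"
  have "\<forall>x\<in>(UNIV::nat set). \<forall>y\<in>UNIV. x \<noteq> y \<longrightarrow> c {x, y} < 2" unfolding c_def by auto
  from Ramsey2[OF infinite_UNIV_nat this] obtain Y t where
    Y: "infinite Y" "t < 2" "\<forall>x\<in>Y. \<forall>y\<in>Y. x \<noteq> y \<longrightarrow> c {x, y} = t" by blast
  define e where "e = enumerate Y"
  have sm: "strict_mono e" unfolding e_def using Y(1) by (simp add: strict_mono_def enumerate_mono)
  have inY: "e k \<in> Y" for k unfolding e_def using Y(1) by (simp add: enumerate_in_set)
  have cc: "c {e k, e l} = t" if "k < l" for k l
  proof -
    have "e k \<noteq> e l" using sm that by (simp add: strict_mono_less_eq strict_mono_eq)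
    then show ?thesis using Y(3) inY by blast
  qed
  have minmax: "Min {e k, e l} = e k" "Max {e k, e l} = e l" if "k < l" for k l
  proof -
    have "e k < e l" using sm that by (simp add: strict_mono_less)
    then show "Min {e k, e l} = e k" "Max {e k, e l} = e l" by auto
  qed
  show ?thesis
  proof (cases "t = 0")
    case True
    have RR: "R (f (e k)) (f (e l))" if "k < l" for k l
    proof -
      have "c {e k, e l} = 0" using cc[OF that] True by simp
      then show ?thesis using minmax[OF that] unfolding c_def by (simp split: if_splits)
    qed
    show ?thesis
      apply (rule exI[where x=e])
      using sm RR by simp
  next
    case False
    have "\<exists>i j. i < j \<and> R (f (e i)) (f (e j))" using wqooD[OF w, of "f \<circ> e"] f by simp
    then obtain i j where "i < j" "R (f (e i)) (f (e j))" by blast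
    then have "c {e i, e j} = 0" using minmax[OF \<open>i < j\<close>] unfolding c_def by simp
    with cc[OF \<open>i < j\<close>] False show ?thesis by simp
  qed
qed

definition lemb :: "('a \<Rightarrow> 'a \<Rightarrow> bool) \<Rightarrow> 'a list \<Rightarrow> 'a list \<Rightarrow> bool" where
  "lemb R xs ys \<longleftrightarrow> (\<exists>g. inj_on g {..<length xs} \<and>
      (\<forall>i<length xs. g i < length ys \<and> R (xs ! i) (ys ! (g i))))"

lemma lemb_Nil: "lemb R [] ys"
  unfolding lemb_def by auto

lemma lemb_tl: assumes "lemb R xs (tl ys)" "ys \<noteq> []" shows "lemb R xs ys"
proof -
  obtain g where g: "inj_on g {..<length xs}" "\<forall>i<length xs. g i < length (tl ys) \<and> R (xs ! i) (tl ys ! (g i))"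
    using assms(1) unfolding lemb_def by blast
  obtain y ys' where ys: "ys = y # ys'" using assms(2) by (cases ys) auto
  show ?thesis unfolding lemb_def
    by (rule exI[of _ "Suc \<circ> g"]) (use g ys in \<open>auto simp: inj_on_def\<close>)
qed

lemma lemb_Cons: assumes "lemb R xs ys" "R x y" shows "lemb R (x # xs) (y # ys)"
proof -
  obtain g where g: "inj_on g {..<length xs}" "\<forall>i<length xs. g i < length ys \<and> R (xs ! i) (ys ! (g i))"
    using assms(1) unfolding lemb_def by blast
  define g' where "g' i = (if i = 0 then 0 else Suc (g (i - 1)))" for i
  have "inj_on g' {..<length (x # xs)}"
  proof (rule inj_onI)
    fix i j assume ij: "i \<in> {..<length (x # xs)}" "j \<in> {..<length (x # xs)}" and eq: "g' i = g' j"
    show "i = j"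
    proof (cases i)
      case 0 then show ?thesis using eq by (cases j) (auto simp: g'_def)
    next
      case (Suc i')
      then show ?thesis
      proof (cases j)
        case 0 then show ?thesis using eq Suc by (auto simp: g'_def)
      next
        case (Suc j')
        then have "g i' = g j'" using eq \<open>i = Suc i'\<close> by (simp add: g'_def)
        moreover have "i' \<in> {..<length xs}" "j' \<in> {..<length xs}" using ij Suc \<open>i = Suc i'\<close> by auto
        ultimately show ?thesis using g(1) Suc \<open>i = Suc i'\<close> unfolding inj_on_def by blast
      qed
    qed
  qed
  moreover have "\<forall>i<length (x # xs). g' i < length (y # ys) \<and> R ((x # xs) ! i) ((y # ys) ! (g' i))"
  proof (intro allI impI)
    fix i assume i: "i < length (x # xs)"
    show "g' i < length (y # ys) \<and> R ((x # xs) ! i) ((y # ys) ! (g' i))"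
    proof (cases i)
      case 0 then show ?thesis using assms(2) by (simp add: g'_def)
    next
      case (Suc k) then show ?thesis using g(2) i by (simp add: g'_def)
    qed
  qed
  ultimately show ?thesis unfolding lemb_def by blast
qed

definition badl :: "('a \<Rightarrow> 'a \<Rightarrow> bool) \<Rightarrow> 'a set \<Rightarrow> (nat \<Rightarrow> 'a list) \<Rightarrow> bool" where
  "badl R Q f \<longleftrightarrow> (\<forall>i::nat. f i \<in> lists Q) \<and> (\<forall>i j. i < j \<longrightarrow> \<not> lemb R (f i) (f j))"

lemma badlD: "badl R Q f \<Longrightarrow> f i \<in> lists Q" "badl R Q f \<Longrightarrow> i < j \<Longrightarrow> \<not> lemb R (f i) (f j)"
  unfolding badl_def by blast+

definition extp :: "('a \<Rightarrow> 'a \<Rightarrow> bool) \<Rightarrow> 'a set \<Rightarrow> 'a list list \<Rightarrow> 'a list \<Rightarrow> bool" where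
  "extp R Q ps x \<longleftrightarrow> (\<exists>f. badl R Q f \<and> (\<forall>i<length ps. f i = ps ! i) \<and> f (length ps) = x)"

definition choosem :: "('a \<Rightarrow> 'a \<Rightarrow> bool) \<Rightarrow> 'a set \<Rightarrow> 'a list list \<Rightarrow> 'a list" where
  "choosem R Q ps = (SOME x. extp R Q ps x \<and> (\<forall>y. extp R Q ps y \<longrightarrow> length x \<le> length y))"

primrec mpre :: "('a \<Rightarrow> 'a \<Rightarrow> bool) \<Rightarrow> 'a set \<Rightarrow> nat \<Rightarrow> 'a list list" where
  "mpre R Q 0 = []"
| "mpre R Q (Suc n) = mpre R Q n @ [choosem R Q (mpre R Q n)]"

lemma length_mpre[simp]: "length (mpre R Q n) = n"
  by (induction n) auto

lemma choosem_spec: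
  assumes "extp R Q ps x"
  shows "extp R Q ps (choosem R Q ps) \<and> (\<forall>y. extp R Q ps y \<longrightarrow> length (choosem R Q ps) \<le> length y)"
proof -
  have "\<exists>x. extp R Q ps x \<and> (\<forall>y. extp R Q ps y \<longrightarrow> length x \<le> length y)"
    using ex_has_least_nat[of "extp R Q ps" x length] assms by blast
  then show ?thesis unfolding choosem_def by (rule someI_ex)
qed

lemma mpre_ext:
  assumes "badl R Q f0"
  shows "\<exists>f. badl R Q f \<and> (\<forall>i<n. f i = mpre R Q n ! i)"
proof (induction n)
  case 0 then show ?case using assms by auto
next
  case (Suc n)
  then obtain f where f: "badl R Q f" "\<forall>i<n. f i = mpre R Q n ! i" by blast
  then have "extp R Q (mpre R Q n) (f n)" unfolding extp_def by auto
  from choosem_spec[OF this] obtain g where g: "badl R Q g" "\<forall>i<n. g i = mpre R Q n ! i"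
    "g n = choosem R Q (mpre R Q n)" unfolding extp_def by auto
  show ?case
    by (rule exI[of _ g]) (use g in \<open>auto simp: nth_append less_Suc_eq\<close>)
qed

lemma mpre_nth: "i < n \<Longrightarrow> mpre R Q n ! i = choosem R Q (mpre R Q i)"
proof (induction n)
  case 0 then show ?case by simp
next
  case (Suc n)
  show ?case
  proof (cases "i < n")
    case True
    then have "mpre R Q (Suc n) ! i = mpre R Q n ! i" by (simp add: nth_append)
    then show ?thesis using Suc True by simp
  next
    case False
    then have "i = n" using Suc.prems by simp
    then show ?thesis by (simp add: nth_append)
  qed
qed

lemma higman_multiset:
  assumes w: "wqoo R Q"
  shows "wqoo (lemb R) (lists Q)"
proof (rule ccontr)
  assume "\<not> wqoo (lemb R) (lists Q)"
  then obtain f0 where "badl R Q f0" unfolding wqoo_def badl_def by blast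
  define w where "w n = choosem R Q (mpre R Q n)" for n
  have pre: "i < n \<Longrightarrow> mpre R Q n ! i = w i" for i n by (simp add: mpre_nth w_def)
  have wbad: "badl R Q w"
    unfolding badl_def
  proof (intro conjI allI impI)
    fix i
    obtain f where f: "badl R Q f" "\<forall>k<Suc i. f k = mpre R Q (Suc i) ! k"
      using mpre_ext[OF \<open>badl R Q f0\<close>] by blast
    moreover have "f i = w i" using f(2) pre[of i "Suc i"] by simp
    ultimately show "w i \<in> lists Q" using badlD(1)[of R Q f i] by simp
  next
    fix i j :: nat assume "i < j"
    obtain f where f: "badl R Q f" "\<forall>k<Suc j. f k = mpre R Q (Suc j) ! k"
      using mpre_ext[OF \<open>badl R Q f0\<close>] by blast
    moreover have "f i = w i" "f j = w j" using f(2) pre[of i "Suc j"] pre[of j "Suc j"] \<open>i < j\<close> by simp_all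
    ultimately show "\<not> lemb R (w i) (w j)" using \<open>i < j\<close> badlD(2)[of R Q f i j] by simp
  qed
  have wmin: "length (w n) \<le> length (g n)" if "badl R Q g" "\<forall>i<n. g i = w i" for g n
  proof -
    have "extp R Q (mpre R Q n) (g n)" unfolding extp_def using that pre by auto
    then show ?thesis using choosem_spec unfolding w_def by blast
  qed
  have wne: "w n \<noteq> []" for n
  proof
    assume "w n = []"
    then have "lemb R (w n) (w (Suc n))" by (simp add: lemb_Nil)
    then show False using badlD(2)[OF wbad, of n "Suc n"] by simp
  qed
  define a where "a n = hd (w n)" for n
  define v where "v n = tl (w n)" for n
  have wav: "w n = a n # v n" for n using wne[of n] unfolding a_def v_def by simp
  have aQ: "a n \<in> Q" and vQ: "v n \<in> lists Q" for n
  proof -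
    have "w n \<in> lists Q" using badlD(1)[OF wbad] by blast
    then show "a n \<in> Q" "v n \<in> lists Q" using wav[of n] by auto
  qed
  have vwqo: "wqoo (lemb R) (range v)"
  proof (rule ccontr)
    assume "\<not> wqoo (lemb R) (range v)"
    then obtain g :: "nat \<Rightarrow> _" where g: "\<forall>i. g i \<in> range v" "\<forall>i j. i < j \<longrightarrow> \<not> lemb R (g i) (g j)"
      unfolding wqoo_def by auto
    define \<phi> where "\<phi> k = (SOME i. g k = v i)" for k
    have g\<phi>: "g k = v (\<phi> k)" for k
    proof -
      have "\<exists>i. g k = v i" using g(1) by auto
      then show ?thesis unfolding \<phi>_def by (rule someI_ex)
    qed
    define n0 where "n0 = (LEAST n. \<exists>k. \<phi> k = n)"
    have "\<exists>k. \<phi> k = n0" unfolding n0_def by (rule LeastI_ex) blast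
    then obtain k0 where k0: "\<phi> k0 = n0" by blast
    have ge: "n0 \<le> \<phi> k" for k unfolding n0_def by (rule Least_le) blast
    define f where "f i = (if i < n0 then w i else g (k0 + (i - n0)))" for i
    have "badl R Q f"
      unfolding badl_def
    proof (intro conjI allI impI)
      fix i show "f i \<in> lists Q"
      proof (cases "i < n0")
        case True then show ?thesis using badlD(1)[OF wbad] unfolding f_def by simp
      next
        case False then show ?thesis using vQ unfolding f_def g\<phi> by simp
      qed
    next
      fix i j :: nat assume ij: "i < j"
      show "\<not> lemb R (f i) (f j)"
      proof (cases "j < n0")
        case True
        then have "f i = w i" "f j = w j" using ij unfolding f_def by simp_all
        then show ?thesis using ij badlD(2)[OF wbad, of i j] by simp
      next
        case jn: False
        show ?thesis
        proof (cases "i < n0")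
          case True
          have "f j = v (\<phi> (k0 + (j - n0)))" using jn by (simp add: f_def g\<phi>)
          moreover have "i < \<phi> (k0 + (j - n0))" using True ge[of "k0 + (j - n0)"] by simp
          moreover have "f i = w i" using True unfolding f_def by simp
          moreover have "\<not> lemb R (w i) (w (\<phi> (k0 + (j - n0))))"
            using badlD(2)[OF wbad] \<open>i < \<phi> (k0 + (j - n0))\<close> by blast
          ultimately show ?thesis using lemb_tl[of R "w i" "w (\<phi> (k0 + (j - n0)))"] wne
            unfolding v_def by metis
        next
          case False
          then have "f i = g (k0 + (i - n0))" "f j = g (k0 + (j - n0))" using jn unfolding f_def by simp_all
          moreover have "k0 + (i - n0) < k0 + (j - n0)" using False jn ij by simp
          ultimately show ?thesis using g(2) by metis
        qed
      qed
    qed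
    moreover have "\<forall>i<n0. f i = w i" unfolding f_def by simp
    ultimately have "length (w n0) \<le> length (f n0)" by (rule wmin)
    moreover have "f n0 = v n0" unfolding f_def using g\<phi> k0 by simp
    ultimately show False using wav[of n0] by simp
  qed
  from wqo_chain[OF w aQ] obtain e :: "nat \<Rightarrow> nat"
    where e0: "strict_mono e \<and> (\<forall>k l. k < l \<longrightarrow> R (a (e k)) (a (e l)))" ..
  have e: "strict_mono e" "\<forall>k l. k < l \<longrightarrow> R (a (e k)) (a (e l))" using e0 by simp_all
  obtain k l :: nat where kl: "k < l" "lemb R (v (e k)) (v (e l))"
    using wqooD[OF vwqo, of "v \<circ> e"] by auto
  have "lemb R (w (e k)) (w (e l))" using lemb_Cons[OF kl(2) e(2)[rule_format, OF kl(1)]] wav by simp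
  moreover have "e k < e l" using e(1) kl(1) by (simp add: strict_mono_less)
  ultimately show False using badlD(2)[OF wbad] by blast
qed



type_synonym 'l st = "nat set \<times> (nat \<Rightarrow> 'l) \<times> (nat \<Rightarrow> nat \<Rightarrow> nat)"

fun valid :: "nat \<Rightarrow> 'l set \<Rightarrow> 'l st \<Rightarrow> bool" where
  "valid d S (V, L, D) \<longleftrightarrow> finite V \<and> (\<forall>u\<in>V. L u \<in> S) \<and> (\<forall>u\<in>V. \<forall>v\<in>V. D u v = D v u) \<and>
     (\<forall>u\<in>V. \<forall>v\<in>V. \<forall>w\<in>V. u \<noteq> v \<and> w \<noteq> u \<and> w \<noteq> v \<longrightarrow> min (D u w) (D w v) \<le> D u v) \<and>
     (\<forall>u\<in>V. \<forall>v\<in>V. u \<noteq> v \<longrightarrow> D u v < d)"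

fun stemb :: "'l st \<Rightarrow> 'l st \<Rightarrow> bool" where
  "stemb (V, L, D) (V', L', D') \<longleftrightarrow> (\<exists>h. inj_on h V \<and> h ` V \<subseteq> V' \<and> (\<forall>u\<in>V. L' (h u) = L u) \<and>
     (\<forall>u\<in>V. \<forall>v\<in>V. u \<noteq> v \<longrightarrow> D' (h u) (h v) = D u v))"

lemma validD:
  assumes "valid d S (V, L, D)"
  shows "finite V" "u \<in> V \<Longrightarrow> L u \<in> S" "u \<in> V \<Longrightarrow> v \<in> V \<Longrightarrow> D u v = D v u"
    "u \<in> V \<Longrightarrow> v \<in> V \<Longrightarrow> w \<in> V \<Longrightarrow> u \<noteq> v \<Longrightarrow> w \<noteq> u \<Longrightarrow> w \<noteq> v \<Longrightarrow> min (D u w) (D w v) \<le> D u v"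
    "u \<in> V \<Longrightarrow> v \<in> V \<Longrightarrow> u \<noteq> v \<Longrightarrow> D u v < d"
  using assms unfolding valid.simps by blast+

declare valid.simps[simp del]

lemma pigeon:
  fixes g :: "nat \<Rightarrow> 'b"
  assumes "finite A" "\<And>i. g i \<in> A"
  shows "\<exists>i j. i < j \<and> g i = g j"
proof -
  have "\<not> inj g"
  proof
    assume "inj g"
    moreover have "finite (range g)" using assms by (meson finite_subset image_subsetI)
    ultimately have "finite (UNIV :: nat set)" using finite_imageD by blast
    then show False by simp
  qed
  then obtain i j where "i \<noteq> j" "g i = g j" unfolding inj_def by blast
  then show ?thesis by (metis linorder_neqE_nat)
qed

definition cls :: "nat set \<Rightarrow> (nat \<Rightarrow> nat \<Rightarrow> nat) \<Rightarrow> nat \<Rightarrow> nat set" where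
  "cls V D u = {v \<in> V. v = u \<or> 1 \<le> D u v}"

lemma cls_self: "u \<in> V \<Longrightarrow> u \<in> cls V D u" unfolding cls_def by simp
lemma cls_sub: "cls V D u \<subseteq> V" unfolding cls_def by auto

lemma cls_eq:
  assumes "valid d S (V, L, D)" "u \<in> V" "v \<in> cls V D u"
  shows "cls V D v = cls V D u"
proof (cases "v = u")
  case True then show ?thesis by simp
next
  case False
  have vV: "v \<in> V" and uv: "1 \<le> D u v" using assms(3) False unfolding cls_def by auto
  have vu: "1 \<le> D v u" using validD(3)[OF assms(1) vV assms(2)] uv by simp
  show ?thesis
  proof (rule set_eqI)
    fix w
    show "w \<in> cls V D v \<longleftrightarrow> w \<in> cls V D u"
    proof (cases "w = u \<or> w = v")
      case True then show ?thesis using vV assms(2) uv vu unfolding cls_def by auto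
    next
      case F: False
      show ?thesis
      proof
        assume "w \<in> cls V D v"
        then have wV: "w \<in> V" and "1 \<le> D v w" using F unfolding cls_def by auto
        then have "min (D u v) (D v w) \<le> D u w" using validD(4)[OF assms(1) assms(2) wV vV] F False by simp
        then show "w \<in> cls V D u" using wV uv \<open>1 \<le> D v w\<close> unfolding cls_def by auto
      next
        assume "w \<in> cls V D u"
        then have wV: "w \<in> V" and "1 \<le> D u w" using F unfolding cls_def by auto
        then have "min (D v u) (D u w) \<le> D v w" using validD(4)[OF assms(1) vV wV assms(2)] F False by simp
        then show "w \<in> cls V D v" using wV vu \<open>1 \<le> D u w\<close> unfolding cls_def by auto
      qed
    qed
  qed
qed

definition clist :: "'l st \<Rightarrow> nat set list" where
  "clist X = (case X of (V, L, D) \<Rightarrow> (SOME cs. distinct cs \<and> set cs = cls V D ` V))"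

lemma clist:
  assumes "finite V"
  shows "distinct (clist (V, L, D)) \<and> set (clist (V, L, D)) = cls V D ` V"
proof -
  have "\<exists>cs. distinct cs \<and> set cs = cls V D ` V"
    using finite_distinct_list[of "cls V D ` V"] assms by blast
  then show ?thesis unfolding clist_def by (simp, rule someI_ex)
qed

definition parts :: "'l st \<Rightarrow> 'l st list" where
  "parts X = (case X of (V, L, D) \<Rightarrow> map (\<lambda>c. (c, L, \<lambda>u v. D u v - 1)) (clist X))"

lemma parts_valid:
  assumes "valid (Suc d) S (V, L, D)"
  shows "parts (V, L, D) \<in> lists {Y. valid d S Y}"
proof -
  have fin: "finite V" using validD(1)[OF assms] .
  have "valid d S (c, L, \<lambda>u v. D u v - 1)" if c: "c \<in> cls V D ` V" for c
  proof -
    obtain u where u: "u \<in> V" "c = cls V D u" using c by blast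
    have cV: "c \<subseteq> V" using u cls_sub by blast
    have ge1: "1 \<le> D x y" if "x \<in> c" "y \<in> c" "x \<noteq> y" for x y
    proof -
      have "cls V D x = c" using cls_eq[OF assms] u that by blast
      then have "y \<in> cls V D x" using that by simp
      then show ?thesis using that unfolding cls_def by auto
    qed
    have "finite c" using fin cV finite_subset by blast
    moreover have "\<forall>x\<in>c. L x \<in> S" using validD(2)[OF assms] cV by auto
    moreover have "\<forall>x\<in>c. \<forall>y\<in>c. D x y - 1 = D y x - 1" using validD(3)[OF assms] cV by (simp add: subset_iff)
    moreover have "\<forall>x\<in>c. \<forall>y\<in>c. \<forall>w\<in>c. x \<noteq> y \<and> w \<noteq> x \<and> w \<noteq> y \<longrightarrow> min (D x w - 1) (D w y - 1) \<le> D x y - 1"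
    proof (intro ballI impI)
      fix x y w assume "x \<in> c" "y \<in> c" "w \<in> c" "x \<noteq> y \<and> w \<noteq> x \<and> w \<noteq> y"
      then have "min (D x w) (D w y) \<le> D x y" using validD(4)[OF assms] cV by (simp add: subset_iff)
      then show "min (D x w - 1) (D w y - 1) \<le> D x y - 1" by linarith
    qed
    moreover have "\<forall>x\<in>c. \<forall>y\<in>c. x \<noteq> y \<longrightarrow> D x y - 1 < d"
    proof (intro ballI impI)
      fix x y assume "x \<in> c" "y \<in> c" "x \<noteq> y"
      then have "D x y < Suc d" "1 \<le> D x y" using validD(5)[OF assms] cV ge1 by (auto simp: subset_iff)
      then show "D x y - 1 < d" by linarith
    qed
    ultimately show ?thesis unfolding valid.simps by blast
  qed
  then have "\<forall>c\<in>set (clist (V, L, D)). valid d S (c, L, \<lambda>u v. D u v - 1)"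
    using clist[OF fin, of L D] by blast
  then show ?thesis unfolding parts_def by (auto intro!: in_listsI)
qed

lemma combine:
  assumes vX: "valid (Suc d) S (V, L, D)" and vY: "valid (Suc d) S (V', L', D')"
    and le: "lemb stemb (parts (V, L, D)) (parts (V', L', D'))"
  shows "stemb (V, L, D) (V', L', D')"
proof -
  define cs where "cs = clist (V, L, D)"
  define cs' where "cs' = clist (V', L', D')"
  have cs: "distinct cs" "set cs = cls V D ` V" using clist[OF validD(1)[OF vX]] cs_def by auto
  have cs': "distinct cs'" "set cs' = cls V' D' ` V'" using clist[OF validD(1)[OF vY]] cs'_def by auto
  have pX: "parts (V, L, D) = map (\<lambda>c. (c, L, \<lambda>u v. D u v - 1)) cs" unfolding parts_def cs_def by simp
  have pY: "parts (V', L', D') = map (\<lambda>c. (c, L', \<lambda>u v. D' u v - 1)) cs'" unfolding parts_def cs'_def by simp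
  from le[unfolded lemb_def] obtain g where gg: "inj_on g {..<length (parts (V, L, D))} \<and>
      (\<forall>i<length (parts (V, L, D)). g i < length (parts (V', L', D')) \<and>
       stemb (parts (V, L, D) ! i) (parts (V', L', D') ! (g i)))" ..
  have g1: "inj_on g {..<length cs}" using gg pX by simp
  have g0: "\<forall>i<length (parts (V, L, D)). g i < length (parts (V', L', D')) \<and>
       stemb (parts (V, L, D) ! i) (parts (V', L', D') ! (g i))" using gg by simp
  have g2: "\<forall>i<length cs. g i < length cs' \<and> stemb (cs ! i, L, \<lambda>u v. D u v - 1) (cs' ! (g i), L', \<lambda>u v. D' u v - 1)"
  proof (intro allI impI)
    fix i assume i: "i < length cs"
    then have gi: "g i < length cs'" using g0 pX pY by simp
    have "stemb (parts (V, L, D) ! i) (parts (V', L', D') ! (g i))" using g0 i pX by simp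
    then show "g i < length cs' \<and> stemb (cs ! i, L, \<lambda>u v. D u v - 1) (cs' ! (g i), L', \<lambda>u v. D' u v - 1)"
      using gi i unfolding pX pY by simp
  qed
  define P where "P k h \<longleftrightarrow> inj_on h (cs ! k) \<and> h ` (cs ! k) \<subseteq> cs' ! (g k) \<and> (\<forall>u\<in>cs ! k. L' (h u) = L u) \<and>
      (\<forall>u\<in>cs ! k. \<forall>v\<in>cs ! k. u \<noteq> v \<longrightarrow> D' (h u) (h v) - 1 = D u v - 1)" for k h
  have Pex: "\<exists>h. P k h" if "k < length cs" for k
  proof -
    have "stemb (cs ! k, L, \<lambda>u v. D u v - 1) (cs' ! (g k), L', \<lambda>u v. D' u v - 1)"
      using g2 that by simp
    then show ?thesis unfolding P_def stemb.simps by simp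
  qed
  define hk where "hk k = (SOME h. P k h)" for k
  have hk: "P k (hk k)" if "k < length cs" for k
    unfolding hk_def using Pex[OF that] by (rule someI_ex)
  define idx where "idx u = (SOME k. k < length cs \<and> cs ! k = cls V D u)" for u
  have idx: "idx u < length cs \<and> cs ! idx u = cls V D u" if "u \<in> V" for u
  proof -
    have "cls V D u \<in> set cs" using cs(2) that by blast
    then have "\<exists>k. k < length cs \<and> cs ! k = cls V D u" by (simp add: in_set_conv_nth)
    then show ?thesis unfolding idx_def by (rule someI_ex)
  qed
  define h where "h u = hk (idx u) u" for u
  have uin: "u \<in> cs ! idx u" if "u \<in> V" for u using idx[OF that] cls_self[OF that] by simp
  have hP: "P (idx u) (hk (idx u))" if "u \<in> V" for u using hk idx[OF that] by blast
  have hin: "h u \<in> cs' ! g (idx u)" if "u \<in> V" for u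
    using hP[OF that] uin[OF that] unfolding P_def h_def by blast
  have glt: "g (idx u) < length cs'" if "u \<in> V" for u using g2 idx[OF that] by blast
  have cs'cls: "\<exists>w\<in>V'. cs' ! k' = cls V' D' w" if "k' < length cs'" for k'
  proof -
    have "cs' ! k' \<in> set cs'" using that by simp
    then show ?thesis using cs'(2) by blast
  qed
  have hV': "h u \<in> V'" if u: "u \<in> V" for u
  proof -
    obtain w where "w \<in> V'" "cs' ! g (idx u) = cls V' D' w" using cs'cls glt[OF u] by blast
    then show ?thesis using hin[OF u] cls_sub by blast
  qed
  have KF: "cls V' D' (h u) = cs' ! g (idx u)" if u: "u \<in> V" for u
  proof -
    obtain w where w: "w \<in> V'" "cs' ! g (idx u) = cls V' D' w" using cs'cls glt[OF u] by blast
    then have "h u \<in> cls V' D' w" using hin[OF u] by simp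
    then show ?thesis using cls_eq[OF vY w(1)] w(2) by simp
  qed
  have idxeq: "idx u = idx v \<longleftrightarrow> cls V D u = cls V D v" if "u \<in> V" "v \<in> V" for u v
  proof
    assume "idx u = idx v" then show "cls V D u = cls V D v" using idx that by metis
  next
    assume "cls V D u = cls V D v"
    then have "cs ! idx u = cs ! idx v" using idx that by simp
    then show "idx u = idx v" using nth_eq_iff_index_eq[OF cs(1)] idx that by blast
  qed
  have KFeq: "cls V' D' (h u) = cls V' D' (h v) \<longleftrightarrow> idx u = idx v" if "u \<in> V" "v \<in> V" for u v
  proof -
    have "cls V' D' (h u) = cls V' D' (h v) \<longleftrightarrow> cs' ! g (idx u) = cs' ! g (idx v)" using KF that by simp
    also have "\<dots> \<longleftrightarrow> g (idx u) = g (idx v)" using nth_eq_iff_index_eq[OF cs'(1)] glt that by blast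
    also have "\<dots> \<longleftrightarrow> idx u = idx v" using g1 idx that unfolding inj_on_def by auto
    finally show ?thesis .
  qed
  have clsD: "v \<in> cls V D u \<longleftrightarrow> 1 \<le> D u v" if "u \<in> V" "v \<in> V" "u \<noteq> v" for u v
    using that unfolding cls_def by auto
  have clsD': "v \<in> cls V' D' u \<longleftrightarrow> 1 \<le> D' u v" if "u \<in> V'" "v \<in> V'" "u \<noteq> v" for u v
    using that unfolding cls_def by auto
  have inj: "inj_on h V"
  proof (rule inj_onI)
    fix u v assume uv: "u \<in> V" "v \<in> V" "h u = h v"
    then have "idx u = idx v" using KFeq by metis
    then have "u \<in> cs ! idx u" "v \<in> cs ! idx u" using uin[OF uv(1)] uin[OF uv(2)] by simp_all
    moreover have "inj_on (hk (idx u)) (cs ! idx u)" using hP[OF uv(1)] unfolding P_def by blast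
    moreover have "hk (idx u) u = hk (idx u) v" using uv(3) \<open>idx u = idx v\<close> unfolding h_def by simp
    ultimately show "u = v" unfolding inj_on_def by blast
  qed
  have lab: "\<forall>u\<in>V. L' (h u) = L u"
    using hP uin unfolding P_def h_def by blast
  have dist: "D' (h u) (h v) = D u v" if uv: "u \<in> V" "v \<in> V" "u \<noteq> v" for u v
  proof -
    have hne: "h u \<noteq> h v" using inj uv unfolding inj_on_def by blast
    show ?thesis
    proof (cases "cls V D u = cls V D v")
      case True
      then have "v \<in> cls V D u" using cls_self[OF uv(2)] by simp
      then have d1: "1 \<le> D u v" using clsD uv by blast
      have "idx u = idx v" using idxeq uv True by blast
      then have "cls V' D' (h u) = cls V' D' (h v)" using KFeq uv by blast
      then have "h v \<in> cls V' D' (h u)" using cls_self[OF hV'[OF uv(2)]] by simp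
      then have d2: "1 \<le> D' (h u) (h v)" using clsD' hV' uv hne by blast
      have "u \<in> cs ! idx u" "v \<in> cs ! idx u" using uin[OF uv(1)] uin[OF uv(2)] \<open>idx u = idx v\<close> by simp_all
      then have "D' (hk (idx u) u) (hk (idx u) v) - 1 = D u v - 1"
        using hP[OF uv(1)] uv(3) unfolding P_def by blast
      then have "D' (h u) (h v) - 1 = D u v - 1" unfolding h_def using \<open>idx u = idx v\<close> by simp
      then show ?thesis using d1 d2 by linarith
    next
      case False
      have "v \<notin> cls V D u" using cls_eq[OF vX uv(1)] False by metis
      then have d1: "D u v = 0" using clsD uv by simp
      have "idx u \<noteq> idx v" using idxeq uv False by blast
      then have "cls V' D' (h u) \<noteq> cls V' D' (h v)" using KFeq uv by blast
      then have "h v \<notin> cls V' D' (h u)" using cls_eq[OF vY hV'[OF uv(1)]] by metis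
      then have "D' (h u) (h v) = 0" using clsD' hV' uv hne by simp
      then show ?thesis using d1 by simp
    qed
  qed
  show ?thesis unfolding stemb.simps
    using inj hV' lab dist by blast
qed

lemma valid0_single:
  assumes "valid 0 S (V, L, D)" "V \<noteq> {}"
  shows "V = {SOME u. u \<in> V}"
proof -
  have "(SOME u. u \<in> V) \<in> V" using assms(2) by (simp add: some_in_eq)
  moreover have "x = y" if "x \<in> V" "y \<in> V" for x y
    using validD(5)[OF assms(1) that] by (cases "x = y") auto
  ultimately show ?thesis by blast
qed

lemma wqo_st:
  assumes "finite S"
  shows "wqoo stemb {X. valid d S X}"
proof (induction d)
  case 0
  show ?case unfolding wqoo_def
  proof (intro allI impI)
    fix f :: "nat \<Rightarrow> 'a st" assume f: "\<forall>i. f i \<in> {X. valid 0 S X}"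
    define tp where "tp X = (if fst X = {} then None else Some (fst (snd X) (SOME u. u \<in> fst X)))" for X :: "'a st"
    have "tp (f i) \<in> insert None (Some ` S)" for i
    proof (cases "f i" rule: prod_cases3)
      case (fields V L D)
      have v: "valid 0 S (V, L, D)" using f[rule_format, of i] fields by simp
      show ?thesis
      proof (cases "V = {}")
        case False
        then have "(SOME u. u \<in> V) \<in> V" by (simp add: some_in_eq)
        then show ?thesis using validD(2)[OF v] fields unfolding tp_def by simp
      qed (simp add: tp_def fields)
    qed
    then obtain i j where ij: "i < j" "tp (f i) = tp (f j)"
      using pigeon[of "insert None (Some ` S)" "\<lambda>i. tp (f i)"] assms by blast
    obtain V L D where fi: "f i = (V, L, D)" by (cases "f i" rule: prod_cases3)
    obtain V' L' D' where fj: "f j = (V', L', D')" by (cases "f j" rule: prod_cases3)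
    have vi: "valid 0 S (V, L, D)" and vj: "valid 0 S (V', L', D')" using f fi fj by (metis mem_Collect_eq)+
    have "stemb (V, L, D) (V', L', D')"
    proof (cases "V = {}")
      case True then show ?thesis by (simp add: inj_on_def)
    next
      case False
      then have "V' \<noteq> {}" using ij(2) fi fj unfolding tp_def by (auto split: if_splits)
      define x where "x = (SOME u. u \<in> V)"
      define y where "y = (SOME u. u \<in> V')"
      have V: "V = {x}" using valid0_single[OF vi False] x_def by simp
      have V': "V' = {y}" using valid0_single[OF vj \<open>V' \<noteq> {}\<close>] y_def by simp
      have "L x = L' y" using ij(2) fi fj False \<open>V' \<noteq> {}\<close> unfolding tp_def x_def y_def by simp
      then show ?thesis unfolding V V' stemb.simps by (intro exI[of _ "\<lambda>_. y"]) simp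
    qed
    then show "\<exists>i j. i < j \<and> stemb (f i) (f j)" using ij fi fj by metis
  qed
next
  case (Suc d)
  have H: "wqoo (lemb stemb) (lists {X. valid d S X})" by (rule higman_multiset[OF Suc.IH])
  show ?case unfolding wqoo_def
  proof (intro allI impI)
    fix f :: "nat \<Rightarrow> 'a st" assume f: "\<forall>i. f i \<in> {X. valid (Suc d) S X}"
    have "parts (f i) \<in> lists {X. valid d S X}" for i
    proof (cases "f i" rule: prod_cases3)
      case (fields V L D)
      then show ?thesis using parts_valid[of d S V L D] f by (metis mem_Collect_eq)
    qed
    then obtain i j where ij: "i < j" "lemb stemb (parts (f i)) (parts (f j))"
      using wqooD[OF H, of "\<lambda>i. parts (f i)"] by blast
    obtain V L D where fi: "f i = (V, L, D)" by (cases "f i" rule: prod_cases3)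
    obtain V' L' D' where fj: "f j = (V', L', D')" by (cases "f j" rule: prod_cases3)
    have vi: "valid (Suc d) S (V, L, D)" and vj: "valid (Suc d) S (V', L', D')" using f fi fj by (metis mem_Collect_eq)+
    have "stemb (V, L, D) (V', L', D')" using combine[OF vi vj] ij(2) fi fj by simp
    then show "\<exists>i j. i < j \<and> stemb (f i) (f j)" using ij fi fj by metis
  qed
qed



locale rtree =
  fixes N :: "'n set" and r :: 'n and p :: "'n \<Rightarrow> 'n"
  assumes rt: "rooted_tree N r p"
begin

abbreviation dep where "dep x \<equiv> node_depth r p x"

lemma fin: "finite N" and rootN: "r \<in> N" and pN: "x \<in> N \<Longrightarrow> x \<noteq> r \<Longrightarrow> p x \<in> N"
  and reach: "x \<in> N \<Longrightarrow> \<exists>k. (p ^^ k) x = r"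
  using rt unfolding rooted_tree_def by blast+

lemma dep_spec: "x \<in> N \<Longrightarrow> (p ^^ dep x) x = r"
  unfolding node_depth_def using reach by (rule LeastI_ex)

lemma dep_least: "(p ^^ k) x = r \<Longrightarrow> dep x \<le> k"
  unfolding node_depth_def by (rule Least_le)

lemma dep_root: "dep r = 0"
  using dep_least[of 0 r] by simp

lemma iter_N: "x \<in> N \<Longrightarrow> k \<le> dep x \<Longrightarrow> (p ^^ k) x \<in> N"
proof (induction k)
  case 0 then show ?case by simp
next
  case (Suc k)
  then have kN: "(p ^^ k) x \<in> N" by simp
  have "(p ^^ k) x \<noteq> r"
  proof
    assume "(p ^^ k) x = r"
    then have "dep x \<le> k" by (rule dep_least)
    then show False using Suc.prems by simp
  qed
  then have "p ((p ^^ k) x) \<in> N" using pN kN by blast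
  then show ?case by simp
qed

lemma dep_iter: "x \<in> N \<Longrightarrow> k \<le> dep x \<Longrightarrow> dep ((p ^^ k) x) = dep x - k"
proof -
  assume x: "x \<in> N" and k: "k \<le> dep x"
  have "(p ^^ (dep x - k)) ((p ^^ k) x) = (p ^^ (dep x - k + k)) x" by (simp add: funpow_add)
  also have "\<dots> = r" using k dep_spec[OF x] by simp
  finally have le: "dep ((p ^^ k) x) \<le> dep x - k" by (rule dep_least)
  have "(p ^^ (dep ((p ^^ k) x) + k)) x = (p ^^ (dep ((p ^^ k) x))) ((p ^^ k) x)" by (simp add: funpow_add)
  also have "\<dots> = r" using dep_spec iter_N[OF x k] by blast
  finally have "dep x \<le> dep ((p ^^ k) x) + k" by (rule dep_least)
  then show ?thesis using le by linarith
qed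

definition anc :: "'n \<Rightarrow> nat \<Rightarrow> 'n" where
  "anc x i = (p ^^ (dep x - i)) x"

lemma anc_N: "x \<in> N \<Longrightarrow> i \<le> dep x \<Longrightarrow> anc x i \<in> N"
  unfolding anc_def by (rule iter_N) auto

lemma dep_anc: "x \<in> N \<Longrightarrow> i \<le> dep x \<Longrightarrow> dep (anc x i) = i"
  unfolding anc_def using dep_iter[of x "dep x - i"] by simp

lemma anc_top: "anc x (dep x) = x" unfolding anc_def by simp

lemma anc_0: "x \<in> N \<Longrightarrow> anc x 0 = r" unfolding anc_def using dep_spec by simp

lemma anc_anc: "x \<in> N \<Longrightarrow> i \<le> j \<Longrightarrow> j \<le> dep x \<Longrightarrow> anc (anc x j) i = anc x i"
proof -
  assume x: "x \<in> N" and ij: "i \<le> j" "j \<le> dep x"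
  have "dep (anc x j) = j" using dep_anc[OF x ij(2)] .
  then have "anc (anc x j) i = (p ^^ (j - i)) ((p ^^ (dep x - j)) x)" unfolding anc_def by simp
  also have "\<dots> = (p ^^ (j - i + (dep x - j))) x" by (simp add: funpow_add)
  also have "j - i + (dep x - j) = dep x - i" using ij by simp
  finally show ?thesis unfolding anc_def by simp
qed

lemma ancestors_eq: "ancestors r p x = anc x ` {..dep x}"
proof
  show "ancestors r p x \<subseteq> anc x ` {..dep x}"
  proof
    fix z assume "z \<in> ancestors r p x"
    then obtain k where k: "z = (p ^^ k) x" "k \<le> dep x" unfolding ancestors_def by blast
    then have "z = anc x (dep x - k)" unfolding anc_def by simp
    then show "z \<in> anc x ` {..dep x}" by simp
  qed
next
  show "anc x ` {..dep x} \<subseteq> ancestors r p x"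
    unfolding ancestors_def anc_def by auto
qed

definition mm :: "'n \<Rightarrow> 'n \<Rightarrow> nat" where
  "mm x y = Max {i. i \<le> dep x \<and> i \<le> dep y \<and> anc x i = anc y i}"

lemma mm_set: "finite {i. i \<le> dep x \<and> i \<le> dep y \<and> anc x i = anc y i}"
  "x \<in> N \<Longrightarrow> y \<in> N \<Longrightarrow> 0 \<in> {i. i \<le> dep x \<and> i \<le> dep y \<and> anc x i = anc y i}"
  using anc_0 by auto

lemma mm_in: "x \<in> N \<Longrightarrow> y \<in> N \<Longrightarrow> mm x y \<le> dep x \<and> mm x y \<le> dep y \<and> anc x (mm x y) = anc y (mm x y)"
proof -
  assume xy: "x \<in> N" "y \<in> N"
  have "mm x y \<in> {i. i \<le> dep x \<and> i \<le> dep y \<and> anc x i = anc y i}"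
    unfolding mm_def using mm_set[of x y] xy by (intro Max_in) auto
  then show ?thesis by simp
qed

lemma mm_ge: "i \<le> dep x \<Longrightarrow> i \<le> dep y \<Longrightarrow> anc x i = anc y i \<Longrightarrow> i \<le> mm x y"
  unfolding mm_def using mm_set(1)[of x y] by (intro Max_ge) auto

lemma mm_sym: "mm x y = mm y x"
  unfolding mm_def by (metis (no_types, lifting))

lemma mm_iff:
  assumes xy: "x \<in> N" "y \<in> N" and i: "i \<le> dep x" "i \<le> dep y"
  shows "anc x i = anc y i \<longleftrightarrow> i \<le> mm x y"
proof
  assume "anc x i = anc y i" then show "i \<le> mm x y" using mm_ge i by blast
next
  assume im: "i \<le> mm x y"
  have m: "mm x y \<le> dep x" "mm x y \<le> dep y" "anc x (mm x y) = anc y (mm x y)" using mm_in[OF xy] by auto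
  have "anc x i = anc (anc x (mm x y)) i" using anc_anc[OF xy(1) im m(1)] by simp
  also have "\<dots> = anc (anc y (mm x y)) i" using m(3) by simp
  also have "\<dots> = anc y i" using anc_anc[OF xy(2) im m(2)] .
  finally show "anc x i = anc y i" .
qed

lemma lca_eq:
  assumes xy: "x \<in> N" "y \<in> N"
  shows "lca r p x y = anc x (mm x y)"
proof -
  have m: "mm x y \<le> dep x" "mm x y \<le> dep y" "anc x (mm x y) = anc y (mm x y)" using mm_in[OF xy] by auto
  let ?CA = "ancestors r p x \<inter> ancestors r p y"
  have inCA: "anc x (mm x y) \<in> ?CA" unfolding ancestors_eq using m by (metis atMost_iff image_eqI IntI)
  have CAdep: "w \<in> ?CA \<Longrightarrow> dep w \<le> mm x y \<and> w = anc x (dep w)" for w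
  proof -
    assume "w \<in> ?CA"
    then obtain i j where ij: "i \<le> dep x" "w = anc x i" "j \<le> dep y" "w = anc y j" unfolding ancestors_eq by blast
    have "dep w = i" using dep_anc[OF xy(1) ij(1)] ij(2) by simp
    moreover have "dep w = j" using dep_anc[OF xy(2) ij(3)] ij(4) by simp
    ultimately have "i = j" by simp
    then have "i \<le> mm x y" using mm_ge[of i x y] ij by simp
    then show ?thesis using \<open>dep w = i\<close> ij(2) by simp
  qed
  have dm: "dep (anc x (mm x y)) = mm x y" using dep_anc[OF xy(1) m(1)] .
  show ?thesis unfolding lca_def
  proof (rule the_equality)
    show "anc x (mm x y) \<in> ?CA \<and> (\<forall>w\<in>?CA. dep w \<le> dep (anc x (mm x y)))"
      using inCA CAdep dm by simp
  next
    fix z assume z: "z \<in> ?CA \<and> (\<forall>w\<in>?CA. dep w \<le> dep z)"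
    then have "dep (anc x (mm x y)) \<le> dep z" using inCA by blast
    moreover have "dep z \<le> mm x y" "z = anc x (dep z)" using CAdep z by blast+
    ultimately show "z = anc x (mm x y)" using dm by simp
  qed
qed

lemma mm_ultra:
  assumes "x \<in> N" "y \<in> N" "w \<in> N"
  shows "min (mm x w) (mm w y) \<le> mm x y"
proof -
  let ?k = "min (mm x w) (mm w y)"
  have a: "mm x w \<le> dep x" "mm x w \<le> dep w" using mm_in[OF assms(1) assms(3)] by simp_all
  have b: "mm w y \<le> dep w" "mm w y \<le> dep y" using mm_in[OF assms(3) assms(2)] by simp_all
  have "anc x ?k = anc w ?k" using mm_iff[of x w ?k] assms a by simp
  moreover have "anc w ?k = anc y ?k" using mm_iff[of w y ?k] assms b by simp
  ultimately show ?thesis using mm_iff[of x y ?k] assms a b by simp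
qed

lemma mm_leaf:
  assumes x: "x \<in> N" and y: "y \<in> N" and xy: "x \<noteq> y" and lx: "is_leaf N r p x"
  shows "mm x y < dep x"
proof (rule ccontr)
  assume "\<not> mm x y < dep x"
  then have eq: "mm x y = dep x" using mm_in[OF x y] by simp
  have dxy: "dep x \<le> dep y" using mm_in[OF x y] eq by simp
  have m3: "anc x (mm x y) = anc y (mm x y)" using mm_in[OF x y] by blast
  have "anc y (dep x) = x" using m3 unfolding eq anc_top by (rule sym)
  show False
  proof (cases "dep x = dep y")
    case True
    have "anc y (dep y) = x" using \<open>anc y (dep x) = x\<close> True by simp
    then have "y = x" unfolding anc_top .
    then show False using xy by simp
  next
    case False
    then have lt: "Suc (dep x) \<le> dep y" using dxy by simp
    define c where "c = anc y (Suc (dep x))"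
    have cN: "c \<in> N" using anc_N[OF y lt] c_def by simp
    have "dep c = Suc (dep x)" using dep_anc[OF y lt] c_def by simp
    then have "c \<noteq> r" using dep_root by auto
    have "p c = (p ^^ (Suc (dep y - Suc (dep x)))) y" unfolding c_def anc_def by simp
    also have "Suc (dep y - Suc (dep x)) = dep y - dep x" using lt by simp
    finally have "p c = x" using \<open>anc y (dep x) = x\<close> unfolding anc_def by simp
    then have "c \<in> children N r p x" unfolding children_def using cN \<open>c \<noteq> r\<close> by simp
    then show False using lx unfolding is_leaf_def by blast
  qed
qed

end

definition Ft :: "nat \<Rightarrow> nat \<times> (nat \<Rightarrow> nat \<Rightarrow> nat \<Rightarrow> bool) \<Rightarrow> nat \<times> (nat \<Rightarrow> nat \<Rightarrow> nat \<Rightarrow> bool) \<Rightarrow> bool" where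
  "Ft k x y = snd x k (fst x) (fst y)"

definition St :: "nat \<Rightarrow> nat \<Rightarrow> (nat \<times> (nat \<Rightarrow> nat \<Rightarrow> nat \<Rightarrow> bool)) set" where
  "St d m = {0..<m} \<times> {g. \<forall>i a b. g i a b \<longrightarrow> i \<le> d \<and> a < m \<and> b < m}"

lemma finite_St: "finite (St d m)"
proof -
  let ?G = "{g :: nat \<Rightarrow> nat \<Rightarrow> nat \<Rightarrow> bool. \<forall>i a b. g i a b \<longrightarrow> i \<le> d \<and> a < m \<and> b < m}"
  let ?f = "\<lambda>g :: nat \<Rightarrow> nat \<Rightarrow> nat \<Rightarrow> bool. {(i, a, b). g i a b}"
  have "inj_on ?f ?G"
  proof (rule inj_onI)
    fix g h :: "nat \<Rightarrow> nat \<Rightarrow> nat \<Rightarrow> bool" assume "?f g = ?f h"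
    then have "(i, a, b) \<in> ?f g \<longleftrightarrow> (i, a, b) \<in> ?f h" for i a b by simp
    then have "g i a b = h i a b" for i a b by simp
    then show "g = h" by (intro ext)
  qed
  moreover have "?f ` ?G \<subseteq> Pow ({..d} \<times> {..<m} \<times> {..<m})" by auto
  moreover have "finite (Pow ({..d} \<times> {..<m} \<times> {..<m}))" by simp
  ultimately have "finite ?G" by (rule inj_on_finite)
  then show ?thesis unfolding St_def by simp
qed

lemma tree_rep:
  fixes G :: "nat graph"
  assumes "has_tree_model G d m"
  shows "\<exists>L D. valid d (St d m) (verts G, L, D) \<and>
     (\<forall>u\<in>verts G. \<forall>v\<in>verts G. u \<noteq> v \<longrightarrow> (adj G u v \<longleftrightarrow> Ft (D u v) (L u) (L v)))"
proof -
  obtain N :: "(nat + nat) set" and r p and Lam :: "nat set" and lab :: "nat \<Rightarrow> nat"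
    and M :: "(nat + nat) \<Rightarrow> nat \<Rightarrow> nat \<Rightarrow> bool" where
    rt: "rooted_tree N r p" and leaves: "{t \<in> N. is_leaf N r p t} = Inl ` verts G" and
    dd: "\<forall>x\<in>N. node_depth r p x \<le> d" and Lam: "finite Lam" "card Lam \<le> m" and
    lab: "\<forall>v\<in>verts G. lab v \<in> Lam" and
    adjM: "\<forall>u\<in>verts G. \<forall>v\<in>verts G. u \<noteq> v \<longrightarrow> (adj G u v \<longleftrightarrow> M (lca r p (Inl u) (Inl v)) (lab u) (lab v))"
    using assms unfolding has_tree_model_def by (elim exE conjE) (rule that; assumption)
  interpret rtree N r p by unfold_locales (rule rt)
  obtain e where e: "bij_betw e Lam {0..<card Lam}" using ex_bij_betw_finite_nat[OF Lam(1)] by blast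
  define e' where "e' = the_inv_into Lam e"
  have e'e: "x \<in> Lam \<Longrightarrow> e' (e x) = x" for x
    unfolding e'_def using e by (simp add: bij_betw_def the_inv_into_f_f)
  have elt: "e x < m" if x: "x \<in> Lam" for x
  proof -
    have "e x \<in> {0..<card Lam}" using e x unfolding bij_betw_def by blast
    then show ?thesis using Lam(2) by simp
  qed
  have inN: "u \<in> verts G \<Longrightarrow> Inl u \<in> N" for u using leaves by blast
  have isl: "u \<in> verts G \<Longrightarrow> is_leaf N r p (Inl u)" for u using leaves by blast
  define L where "L u = (e (lab u), \<lambda>i a b. i \<le> d \<and> a < m \<and> b < m \<and> M (anc (Inl u) i) (e' a) (e' b))" for u
  define D where "D u v = mm (Inl u) (Inl v)" for u v
  have finV: "finite (verts G)"
  proof -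
    have "finite (Inl ` verts G :: (nat + nat) set)" using leaves fin by (metis (no_types, lifting) finite_subset mem_Collect_eq subsetI)
    then show ?thesis by (rule finite_imageD) simp
  qed
  have Dlt: "D u v < d" if "u \<in> verts G" "v \<in> verts G" "u \<noteq> v" for u v
  proof -
    have "D u v < dep (Inl u)" unfolding D_def using mm_leaf[OF inN[OF that(1)] inN[OF that(2)]] isl[OF that(1)] that(3) by simp
    then show ?thesis using dd inN[OF that(1)] by fastforce
  qed
  have "valid d (St d m) (verts G, L, D)"
    unfolding valid.simps
  proof (intro conjI ballI impI)
    show "finite (verts G)" by (rule finV)
  next
    fix u assume "u \<in> verts G"
    then show "L u \<in> St d m" unfolding L_def St_def using elt lab by auto
  next
    fix u v assume "u \<in> verts G" "v \<in> verts G"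
    show "D u v = D v u" unfolding D_def by (rule mm_sym)
  next
    fix u v w assume "u \<in> verts G" "v \<in> verts G" "w \<in> verts G" "u \<noteq> v \<and> w \<noteq> u \<and> w \<noteq> v"
    then show "min (D u w) (D w v) \<le> D u v" unfolding D_def using mm_ultra inN by blast
  next
    fix u v assume "u \<in> verts G" "v \<in> verts G" "u \<noteq> v"
    then show "D u v < d" by (rule Dlt)
  qed
  moreover have "adj G u v \<longleftrightarrow> Ft (D u v) (L u) (L v)" if uv: "u \<in> verts G" "v \<in> verts G" "u \<noteq> v" for u v
  proof -
    have "Ft (D u v) (L u) (L v) \<longleftrightarrow> M (anc (Inl u) (D u v)) (lab u) (lab v)"
      unfolding Ft_def L_def using Dlt[OF uv] elt lab e'e uv by simp
    also have "anc (Inl u) (D u v) = lca r p (Inl u) (Inl v)" unfolding D_def using lca_eq inN uv by simp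
    finally show ?thesis using adjM uv by simp
  qed
  ultimately show ?thesis by blast
qed



definition isub :: "nat graph \<Rightarrow> nat set \<Rightarrow> nat graph" where
  "isub G X = (X, \<lambda>u v. u \<in> X \<and> v \<in> X \<and> adj G u v)"

lemma isub_verts[simp]: "verts (isub G X) = X" unfolding isub_def verts_def by simp
lemma isub_adj[simp]: "adj (isub G X) u v \<longleftrightarrow> u \<in> X \<and> v \<in> X \<and> adj G u v"
  unfolding isub_def adj_def by simp

lemma isub_induced: "X \<subseteq> verts G \<Longrightarrow> induced_subgraph (isub G X) G"
  unfolding induced_subgraph_def by (simp add: fun_eq_iff)

lemma graph_isub: "graph G \<Longrightarrow> X \<subseteq> verts G \<Longrightarrow> graph (isub G X)"
  unfolding graph_def using finite_subset by auto

lemma graph_adjD: "graph G \<Longrightarrow> adj G u v \<Longrightarrow> u \<in> verts G \<and> v \<in> verts G \<and> u \<noteq> v \<and> adj G v u"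
  unfolding graph_def by blast

lemma graph_fin: "graph G \<Longrightarrow> finite (verts G)" unfolding graph_def by blast

lemma isub_self: "graph G \<Longrightarrow> isub G (verts G) = G"
proof -
  assume g: "graph G"
  have "adj (isub G (verts G)) = adj G" using graph_adjD[OF g] by (auto simp: fun_eq_iff)
  then show ?thesis unfolding isub_def verts_def adj_def by (simp add: prod_eq_iff)
qed

lemma isub_isub: "Y \<subseteq> X \<Longrightarrow> isub (isub G X) Y = isub G Y"
  unfolding isub_def adj_def by (auto simp: fun_eq_iff)

definition rep :: "(nat \<Rightarrow> 'l \<Rightarrow> 'l \<Rightarrow> bool) \<Rightarrow> nat graph \<Rightarrow> (nat \<Rightarrow> 'l) \<Rightarrow> (nat \<Rightarrow> nat \<Rightarrow> nat) \<Rightarrow> bool" where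
  "rep F G L D \<longleftrightarrow> (\<forall>u\<in>verts G. \<forall>v\<in>verts G. u \<noteq> v \<longrightarrow> (adj G u v \<longleftrightarrow> F (D u v) (L u) (L v)))"

definition Sx :: "'l set \<Rightarrow> ('l \<times> bool) option set" where
  "Sx S = insert None (Some ` (S \<times> UNIV))"

definition Fx :: "(nat \<Rightarrow> 'l \<Rightarrow> 'l \<Rightarrow> bool) \<Rightarrow> nat \<Rightarrow> ('l \<times> bool) option \<Rightarrow> ('l \<times> bool) option \<Rightarrow> bool" where
  "Fx F k x y = (case x of None \<Rightarrow> (case y of None \<Rightarrow> False | Some a \<Rightarrow> snd a)
     | Some a \<Rightarrow> (case y of None \<Rightarrow> snd a | Some b \<Rightarrow> (0 < k \<and> F (k - 1) (fst a) (fst b))))"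

lemma finite_Sx: "finite S \<Longrightarrow> finite (Sx S)" unfolding Sx_def by simp

lemma ext_rep:
  assumes g: "graph H" and v: "v \<in> verts H"
    and val: "valid d S (verts H - {v}, L, D)" and r: "rep F (isub H (verts H - {v})) L D"
  shows "\<exists>L' D'. valid (Suc d) (Sx S) (verts H, L', D') \<and> rep (Fx F) H L' D'"
proof -
  define L' where "L' u = (if u = v then None else Some (L u, adj H u v))" for u
  define D' where "D' a b = (if a = v \<or> b = v then 0 else Suc (D a b))" for a b
  let ?V = "verts H - {v}"
  have "valid (Suc d) (Sx S) (verts H, L', D')"
    unfolding valid.simps
  proof (intro conjI ballI impI)
    show "finite (verts H)" using graph_fin[OF g] .
  next
    fix u assume u: "u \<in> verts H"
    show "L' u \<in> Sx S"
    proof (cases "u = v")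
      case False
      then have "L u \<in> S" using validD(2)[OF val] u by simp
      then show ?thesis using False unfolding L'_def Sx_def by simp
    qed (simp add: L'_def Sx_def)
  next
    fix a b assume "a \<in> verts H" "b \<in> verts H"
    then show "D' a b = D' b a" unfolding D'_def using validD(3)[OF val] by auto
  next
    fix a b w assume abw: "a \<in> verts H" "b \<in> verts H" "w \<in> verts H" "a \<noteq> b \<and> w \<noteq> a \<and> w \<noteq> b"
    show "min (D' a w) (D' w b) \<le> D' a b"
    proof (cases "a = v \<or> b = v \<or> w = v")
      case True then show ?thesis unfolding D'_def by auto
    next
      case False
      then have "min (D a w) (D w b) \<le> D a b" using validD(4)[OF val] abw by simp
      then show ?thesis unfolding D'_def using False by simp
    qed
  next
    fix a b assume ab: "a \<in> verts H" "b \<in> verts H" "a \<noteq> b"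
    show "D' a b < Suc d"
    proof (cases "a = v \<or> b = v")
      case True then show ?thesis unfolding D'_def by auto
    next
      case False
      then have "D a b < d" using validD(5)[OF val] ab by simp
      then show ?thesis unfolding D'_def using False by simp
    qed
  qed
  moreover have "rep (Fx F) H L' D'"
    unfolding rep_def
  proof (intro ballI impI)
    fix a b assume ab: "a \<in> verts H" "b \<in> verts H" "a \<noteq> b"
    show "adj H a b \<longleftrightarrow> Fx F (D' a b) (L' a) (L' b)"
    proof (cases "a = v")
      case True
      then have "b \<noteq> v" using ab by simp
      have "adj H a b \<longleftrightarrow> adj H b v" using True graph_adjD[OF g] by blast
      then show ?thesis using True \<open>b \<noteq> v\<close> unfolding L'_def D'_def Fx_def by simp
    next
      case av: False
      show ?thesis
      proof (cases "b = v")
        case True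
        then show ?thesis using av unfolding L'_def D'_def Fx_def by simp
      next
        case False
        have "adj H a b \<longleftrightarrow> F (D a b) (L a) (L b)"
          using r ab av False unfolding rep_def by simp
        then show ?thesis using av False unfolding L'_def D'_def Fx_def by simp
      qed
    qed
  qed
  ultimately show ?thesis by blast
qed

definition mnm :: "nat graph set \<Rightarrow> nat graph \<Rightarrow> bool" where
  "mnm C H \<longleftrightarrow> graph H \<and> H \<notin> C \<and> (\<forall>X. X \<subset> verts H \<longrightarrow> isub H X \<in> C)"

lemma member_rep:
  assumes bd: "\<forall>G\<in>C. verts G \<noteq> {} \<longrightarrow> has_tree_model G d m" and G: "G \<in> C"
  shows "\<exists>L D. valid d (St d m) (verts G, L, D) \<and> rep Ft G L D"
proof (cases "verts G = {}")
  case True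
  then show ?thesis unfolding valid.simps rep_def by simp
next
  case False
  then have "has_tree_model G d m" using bd G by blast
  from tree_rep[OF this] show ?thesis unfolding rep_def by blast
qed

lemma mnm_rep:
  assumes her: "hereditary C" and bd: "\<forall>G\<in>C. verts G \<noteq> {} \<longrightarrow> has_tree_model G d m"
    and H: "mnm C H"
  shows "\<exists>L D. valid (Suc d) (Sx (St d m)) (verts H, L, D) \<and> rep (Fx Ft) H L D"
proof (cases "verts H = {}")
  case True
  then show ?thesis unfolding valid.simps rep_def by simp
next
  case False
  then obtain v where v: "v \<in> verts H" by blast
  have g: "graph H" using H unfolding mnm_def by blast
  have "verts H - {v} \<subset> verts H" using v by blast
  then have inC: "isub H (verts H - {v}) \<in> C" using H unfolding mnm_def by blast
  obtain L D where LD: "valid d (St d m) (verts (isub H (verts H - {v})), L, D)"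
     "rep Ft (isub H (verts H - {v})) L D" using member_rep[OF bd inC] by blast
  show ?thesis using ext_rep[OF g v _ LD(2)] LD(1) by simp
qed

lemma emb_adj:
  assumes g1: "graph G1" and g2: "graph G2" and r1: "rep F G1 L1 D1" and r2: "rep F G2 L2 D2"
    and e: "stemb (verts G1, L1, D1) (verts G2, L2, D2)"
  shows "\<exists>h. inj_on h (verts G1) \<and> h ` verts G1 \<subseteq> verts G2 \<and>
     (\<forall>u\<in>verts G1. \<forall>v\<in>verts G1. adj G1 u v \<longleftrightarrow> adj G2 (h u) (h v))"
proof -
  from e[unfolded stemb.simps] obtain h where h: "inj_on h (verts G1) \<and> h ` verts G1 \<subseteq> verts G2 \<and>
     (\<forall>u\<in>verts G1. L2 (h u) = L1 u) \<and> (\<forall>u\<in>verts G1. \<forall>v\<in>verts G1. u \<noteq> v \<longrightarrow> D2 (h u) (h v) = D1 u v)" ..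
  have "adj G1 u v \<longleftrightarrow> adj G2 (h u) (h v)" if uv: "u \<in> verts G1" "v \<in> verts G1" for u v
  proof (cases "u = v")
    case True
    have "\<not> adj G1 u u" using graph_adjD[OF g1] by blast
    moreover have "\<not> adj G2 (h u) (h u)" using graph_adjD[OF g2] by blast
    ultimately show ?thesis using True by simp
  next
    case False
    have hne: "h u \<noteq> h v" using h uv False unfolding inj_on_def by blast
    have hin: "h u \<in> verts G2" "h v \<in> verts G2" using h uv by blast+
    have "adj G1 u v \<longleftrightarrow> F (D1 u v) (L1 u) (L1 v)" using r1 uv False unfolding rep_def by blast
    also have "\<dots> \<longleftrightarrow> F (D2 (h u) (h v)) (L2 (h u)) (L2 (h v))" using h uv False by simp
    also have "\<dots> \<longleftrightarrow> adj G2 (h u) (h v)" using r2 hin hne unfolding rep_def by blast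
    finally show ?thesis .
  qed
  then show ?thesis using h by blast
qed

lemma iso_inv:
  assumes inj: "inj_on h V" and adjh: "\<forall>u\<in>V. \<forall>v\<in>V. adj G1 u v \<longleftrightarrow> adj G2 (h u) (h v)"
    and V: "verts G1 = V" and sub: "h ` V \<subseteq> verts G2"
  shows "graph_iso (the_inv_into V h) (isub G2 (h ` V)) G1"
  unfolding graph_iso_def
proof (intro conjI ballI)
  show "bij_betw (the_inv_into V h) (verts (isub G2 (h ` V))) (verts G1)"
    using bij_betw_the_inv_into[OF inj_on_imp_bij_betw[OF inj]] V by simp
next
  fix x y assume "x \<in> verts (isub G2 (h ` V))" "y \<in> verts (isub G2 (h ` V))"
  then obtain a b where ab: "a \<in> V" "b \<in> V" "x = h a" "y = h b" by auto
  have "the_inv_into V h x = a" "the_inv_into V h y = b" using the_inv_into_f_f[OF inj] ab by simp_all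
  then show "adj (isub G2 (h ` V)) x y \<longleftrightarrow> adj G1 (the_inv_into V h x) (the_inv_into V h y)"
    using adjh ab by simp
qed

lemma mnm_bound:
  assumes her: "hereditary C" and bd: "\<forall>G\<in>C. verts G \<noteq> {} \<longrightarrow> has_tree_model G d m"
  shows "\<exists>B. \<forall>H. mnm C H \<longrightarrow> card (verts H) \<le> B"
proof (rule ccontr)
  assume na: "\<not> (\<exists>B. \<forall>H. mnm C H \<longrightarrow> card (verts H) \<le> B)"
  have ex: "\<exists>H. mnm C H \<and> B < card (verts H)" for B
  proof (rule ccontr)
    assume "\<not> (\<exists>H. mnm C H \<and> B < card (verts H))"
    then have "\<forall>H. mnm C H \<longrightarrow> card (verts H) \<le> B" by (simp add: not_less)
    then show False using na by blast
  qed
  define pick where "pick B = (SOME H. mnm C H \<and> B < card (verts H))" for B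
  have pick: "mnm C (pick B) \<and> B < card (verts (pick B))" for B
    unfolding pick_def using ex[of B] by (rule someI_ex)
  define g where "g = rec_nat (pick 0) (\<lambda>_ H. pick (card (verts H)))"
  have g0: "g 0 = pick 0" and gS: "g (Suc k) = pick (card (verts (g k)))" for k by (simp_all add: g_def)
  have gm: "mnm C (g k)" for k
  proof (cases k)
    case 0 then show ?thesis using g0 pick by simp
  next
    case (Suc k') then show ?thesis using gS pick by simp
  qed
  have inc: "card (verts (g k)) < card (verts (g (Suc k)))" for k using gS pick by simp
  have cardlt: "i < j \<Longrightarrow> card (verts (g i)) < card (verts (g j))" for i j
    using lift_Suc_mono_less[of "\<lambda>k. card (verts (g k))", OF inc] by blast
  have exLD: "\<exists>LD. valid (Suc d) (Sx (St d m)) (verts (g k), fst LD, snd LD) \<and> rep (Fx Ft) (g k) (fst LD) (snd LD)" for k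
  proof -
    obtain L D where "valid (Suc d) (Sx (St d m)) (verts (g k), L, D) \<and> rep (Fx Ft) (g k) L D"
      using mnm_rep[OF her bd gm[of k]] by blast
    then show ?thesis by (intro exI[of _ "(L, D)"]) simp
  qed
  define LL where "LL k = (SOME LD. valid (Suc d) (Sx (St d m)) (verts (g k), fst LD, snd LD) \<and> rep (Fx Ft) (g k) (fst LD) (snd LD))" for k
  have LL: "valid (Suc d) (Sx (St d m)) (verts (g k), fst (LL k), snd (LL k)) \<and> rep (Fx Ft) (g k) (fst (LL k)) (snd (LL k))" for k
    unfolding LL_def using exLD[of k] by (rule someI_ex)
  define X where "X k = (verts (g k), fst (LL k), snd (LL k))" for k
  have W: "wqoo stemb {X. valid (Suc d) (Sx (St d m)) X}" by (rule wqo_st[OF finite_Sx[OF finite_St]])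
  have "X k \<in> {X. valid (Suc d) (Sx (St d m)) X}" for k using LL[of k] unfolding X_def by simp
  then obtain i j where ij: "i < j" "stemb (X i) (X j)" using wqooD[OF W] by blast
  have gg: "graph (g k)" for k using gm[of k] unfolding mnm_def by blast
  obtain h where h: "inj_on h (verts (g i))" "h ` verts (g i) \<subseteq> verts (g j)"
    "\<forall>u\<in>verts (g i). \<forall>v\<in>verts (g i). adj (g i) u v \<longleftrightarrow> adj (g j) (h u) (h v)"
    using emb_adj[OF gg[of i] gg[of j] conjunct2[OF LL[of i]] conjunct2[OF LL[of j]]] ij(2) unfolding X_def by blast
  have "card (h ` verts (g i)) = card (verts (g i))" using card_image[OF h(1)] .
  then have "h ` verts (g i) \<noteq> verts (g j)" using cardlt[OF ij(1)] by auto
  then have "h ` verts (g i) \<subset> verts (g j)" using h(2) by blast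
  then have KC: "isub (g j) (h ` verts (g i)) \<in> C" using gm[of j] unfolding mnm_def by blast
  have iso: "graph_iso (the_inv_into (verts (g i)) h) (isub (g j) (h ` verts (g i))) (g i)"
    by (rule iso_inv[OF h(1) h(3) refl h(2)])
  have "g i \<in> C" using her KC gg[of i] iso unfolding hereditary_def by blast
  then show False using gm[of i] unfolding mnm_def by blast
qed

definition TT :: fo where "TT = FNot (FAnd (FEx 0 (FEq 0 0)) (FNot (FEx 0 (FEq 0 0))))"

lemma sat_TT: "sat G \<rho> TT" by (simp add: TT_def)
lemma fv_TT: "fv TT = {}" by (simp add: TT_def)

definition conjs :: "fo list \<Rightarrow> fo" where "conjs xs = foldr FAnd xs TT"

lemma sat_conjs: "sat G \<rho> (conjs xs) \<longleftrightarrow> (\<forall>\<phi>\<in>set xs. sat G \<rho> \<phi>)"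
  by (induction xs) (simp_all add: conjs_def sat_TT)

lemma fv_conjs: "fv (conjs xs) = (\<Union>\<phi>\<in>set xs. fv \<phi>)"
  by (induction xs) (simp_all add: conjs_def fv_TT)

lemma fv_exs: "fv (foldr FEx xs \<phi>) = fv \<phi> - set xs"
  by (induction xs) auto

lemma sat_exs: "sat G \<rho> (foldr FEx xs \<phi>) \<longleftrightarrow>
  (\<exists>\<rho>'. (\<forall>x\<in>set xs. \<rho>' x \<in> verts G) \<and> (\<forall>x. x \<notin> set xs \<longrightarrow> \<rho>' x = \<rho> x) \<and> sat G \<rho>' \<phi>)"
proof (induction xs arbitrary: \<rho>)
  case Nil
  show ?case
  proof
    assume "sat G \<rho> (foldr FEx [] \<phi>)"
    then show "\<exists>\<rho>'. (\<forall>x\<in>set []. \<rho>' x \<in> verts G) \<and> (\<forall>x. x \<notin> set [] \<longrightarrow> \<rho>' x = \<rho> x) \<and> sat G \<rho>' \<phi>"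
      by (intro exI[of _ \<rho>]) simp
  next
    assume "\<exists>\<rho>'. (\<forall>x\<in>set []. \<rho>' x \<in> verts G) \<and> (\<forall>x. x \<notin> set [] \<longrightarrow> \<rho>' x = \<rho> x) \<and> sat G \<rho>' \<phi>"
    then obtain \<rho>' where "\<forall>x. \<rho>' x = \<rho> x" "sat G \<rho>' \<phi>" by auto
    moreover have "\<rho>' = \<rho>" using calculation(1) by (simp add: fun_eq_iff)
    ultimately show "sat G \<rho> (foldr FEx [] \<phi>)" by simp
  qed
next
  case (Cons x xs)
  have "sat G \<rho> (foldr FEx (x # xs) \<phi>) \<longleftrightarrow> (\<exists>a\<in>verts G. sat G (\<rho>(x := a)) (foldr FEx xs \<phi>))" by simp
  also have "\<dots> \<longleftrightarrow> (\<exists>a\<in>verts G. \<exists>\<rho>'. (\<forall>y\<in>set xs. \<rho>' y \<in> verts G) \<and>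
      (\<forall>y. y \<notin> set xs \<longrightarrow> \<rho>' y = (\<rho>(x := a)) y) \<and> sat G \<rho>' \<phi>)" using Cons.IH by simp
  also have "\<dots> \<longleftrightarrow> (\<exists>\<rho>'. (\<forall>y\<in>set (x # xs). \<rho>' y \<in> verts G) \<and> (\<forall>y. y \<notin> set (x # xs) \<longrightarrow> \<rho>' y = \<rho> y) \<and> sat G \<rho>' \<phi>)"
  proof
    assume "\<exists>a\<in>verts G. \<exists>\<rho>'. (\<forall>y\<in>set xs. \<rho>' y \<in> verts G) \<and>
      (\<forall>y. y \<notin> set xs \<longrightarrow> \<rho>' y = (\<rho>(x := a)) y) \<and> sat G \<rho>' \<phi>"
    then obtain a \<rho>' where a: "a \<in> verts G" and r1: "\<forall>y\<in>set xs. \<rho>' y \<in> verts G"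
      and r2: "\<forall>y. y \<notin> set xs \<longrightarrow> \<rho>' y = (\<rho>(x := a)) y" and r3: "sat G \<rho>' \<phi>" by blast
    have "\<forall>y\<in>set (x # xs). \<rho>' y \<in> verts G"
    proof
      fix y assume "y \<in> set (x # xs)"
      then show "\<rho>' y \<in> verts G" using r1 r2 a by (cases "y \<in> set xs") auto
    qed
    moreover have "\<forall>y. y \<notin> set (x # xs) \<longrightarrow> \<rho>' y = \<rho> y" using r2 by auto
    ultimately show "\<exists>\<rho>'. (\<forall>y\<in>set (x # xs). \<rho>' y \<in> verts G) \<and> (\<forall>y. y \<notin> set (x # xs) \<longrightarrow> \<rho>' y = \<rho> y) \<and> sat G \<rho>' \<phi>"
      using r3 by blast
  next
    assume "\<exists>\<rho>'. (\<forall>y\<in>set (x # xs). \<rho>' y \<in> verts G) \<and> (\<forall>y. y \<notin> set (x # xs) \<longrightarrow> \<rho>' y = \<rho> y) \<and> sat G \<rho>' \<phi>"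
    then obtain \<rho>' where r1: "\<forall>y\<in>set (x # xs). \<rho>' y \<in> verts G"
      and r2: "\<forall>y. y \<notin> set (x # xs) \<longrightarrow> \<rho>' y = \<rho> y" and r3: "sat G \<rho>' \<phi>" by blast
    have "\<rho>' x \<in> verts G" using r1 by simp
    moreover have "\<forall>y\<in>set xs. \<rho>' y \<in> verts G" using r1 by simp
    moreover have "\<forall>y. y \<notin> set xs \<longrightarrow> \<rho>' y = (\<rho>(x := \<rho>' x)) y" using r2 by auto
    ultimately show "\<exists>a\<in>verts G. \<exists>\<rho>'. (\<forall>y\<in>set xs. \<rho>' y \<in> verts G) \<and>
      (\<forall>y. y \<notin> set xs \<longrightarrow> \<rho>' y = (\<rho>(x := a)) y) \<and> sat G \<rho>' \<phi>" using r3 by blast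
  qed
  finally show ?case .
qed

definition atom :: "nat graph \<Rightarrow> nat \<times> nat \<Rightarrow> fo" where
  "atom H ij = (case ij of (i, j) \<Rightarrow> if i = j then TT else
     FAnd (FNot (FEq i j)) (if adj H i j then FAdj i j else FNot (FAdj i j)))"

lemma sat_atom: "sat G \<rho> (atom H (i, j)) \<longleftrightarrow> (i \<noteq> j \<longrightarrow> \<rho> i \<noteq> \<rho> j \<and> (adj G (\<rho> i) (\<rho> j) \<longleftrightarrow> adj H i j))"
  by (simp add: atom_def sat_TT)

lemma fv_atom: "fv (atom H (i, j)) \<subseteq> {i, j}"
  by (simp add: atom_def fv_TT)

definition body :: "nat graph \<Rightarrow> nat \<Rightarrow> fo" where
  "body H n = conjs (map (atom H) (List.product [0..<n] [0..<n]))"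

lemma sat_body: "sat G \<rho> (body H n) \<longleftrightarrow>
   (\<forall>i<n. \<forall>j<n. i \<noteq> j \<longrightarrow> \<rho> i \<noteq> \<rho> j \<and> (adj G (\<rho> i) (\<rho> j) \<longleftrightarrow> adj H i j))"
proof -
  have "sat G \<rho> (body H n) \<longleftrightarrow> (\<forall>ij\<in>{0..<n} \<times> {0..<n}. sat G \<rho> (atom H ij))"
    unfolding body_def sat_conjs by simp
  also have "\<dots> \<longleftrightarrow> (\<forall>i<n. \<forall>j<n. sat G \<rho> (atom H (i, j)))" by auto
  finally show ?thesis by (simp add: sat_atom)
qed

lemma fv_body: "fv (body H n) \<subseteq> {0..<n}"
proof -
  have "fv (atom H ij) \<subseteq> {0..<n}" if "ij \<in> {0..<n} \<times> {0..<n}" for ij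
    using that fv_atom[of H "fst ij" "snd ij"] by auto
  then show ?thesis unfolding body_def fv_conjs by auto
qed

definition psi :: "nat graph \<Rightarrow> nat \<Rightarrow> fo" where
  "psi H n = foldr FEx [0..<n] (body H n)"

definition embeds :: "nat graph \<Rightarrow> nat graph \<Rightarrow> nat \<Rightarrow> bool" where
  "embeds H G n \<longleftrightarrow> (\<exists>f. (\<forall>i<n. f i \<in> verts G) \<and>
     (\<forall>i<n. \<forall>j<n. i \<noteq> j \<longrightarrow> f i \<noteq> f j \<and> (adj G (f i) (f j) \<longleftrightarrow> adj H i j)))"

lemma fv_psi: "fv (psi H n) = {}"
  unfolding psi_def fv_exs using fv_body by auto

lemma sat_psi: "sat G \<rho> (psi H n) \<longleftrightarrow> embeds H G n"
proof
  assume "sat G \<rho> (psi H n)"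
  then obtain \<rho>' where "\<forall>x\<in>set [0..<n]. \<rho>' x \<in> verts G" "sat G \<rho>' (body H n)"
    unfolding psi_def sat_exs by blast
  then show "embeds H G n" unfolding embeds_def sat_body by (intro exI[of _ \<rho>']) simp
next
  assume "embeds H G n"
  then obtain f where f1: "\<forall>i<n. f i \<in> verts G"
    and f2: "\<forall>i<n. \<forall>j<n. i \<noteq> j \<longrightarrow> f i \<noteq> f j \<and> (adj G (f i) (f j) \<longleftrightarrow> adj H i j)"
    unfolding embeds_def by blast
  define \<rho>' where "\<rho>' x = (if x < n then f x else \<rho> x)" for x
  have "\<forall>x\<in>set [0..<n]. \<rho>' x \<in> verts G" using f1 unfolding \<rho>'_def by simp
  moreover have "\<forall>x. x \<notin> set [0..<n] \<longrightarrow> \<rho>' x = \<rho> x" unfolding \<rho>'_def by simp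
  moreover have "sat G \<rho>' (body H n)" unfolding sat_body \<rho>'_def using f2 by simp
  ultimately show "sat G \<rho> (psi H n)" unfolding psi_def sat_exs by blast
qed

definition BS :: "nat graph set \<Rightarrow> nat \<Rightarrow> nat graph set" where
  "BS C Bd = {H. graph H \<and> H \<notin> C \<and> (\<exists>n\<le>Bd. verts H = {0..<n})}"

lemma finite_BS: "finite (BS C Bd)"
proof -
  let ?g = "\<lambda>(n, E). ({0..<n}, \<lambda>u v. (u, v) \<in> E) :: nat graph"
  have "BS C Bd \<subseteq> ?g ` ({..Bd} \<times> Pow ({..<Bd} \<times> {..<Bd}))"
  proof
    fix H assume "H \<in> BS C Bd"
    then obtain n where H: "graph H" "n \<le> Bd" "verts H = {0..<n}" unfolding BS_def by blast
    define E where "E = {(u, v). adj H u v}"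
    have "E \<subseteq> {..<Bd} \<times> {..<Bd}"
    proof
      fix x assume "x \<in> E"
      then obtain a b where ab: "x = (a, b)" "adj H a b" unfolding E_def by blast
      then have "a \<in> verts H" "b \<in> verts H" using graph_adjD[OF H(1)] by blast+
      then have "a < n" "b < n" using H(3) by auto
      then show "x \<in> {..<Bd} \<times> {..<Bd}" using ab(1) H(2) by simp
    qed
    moreover have "H = ?g (n, E)"
    proof -
      have "fst H = {0..<n}" using H(3) unfolding verts_def .
      moreover have "snd H = (\<lambda>u v. (u, v) \<in> E)" unfolding E_def adj_def by simp
      ultimately show ?thesis by (simp add: prod_eq_iff)
    qed
    ultimately show "H \<in> ?g ` ({..Bd} \<times> Pow ({..<Bd} \<times> {..<Bd}))" using H(2) by blast
  qed
  moreover have "finite (?g ` ({..Bd} \<times> Pow ({..<Bd} \<times> {..<Bd})))" by simp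
  ultimately show ?thesis by (rule finite_subset)
qed

theorem corollary3p19:
  fixes C :: "nat graph set"
  assumes "hereditary C" and "bounded_shrubdepth C"
  shows "\<exists>\<phi>. sentence \<phi> \<and> (\<forall>G :: nat graph. graph G \<longrightarrow> (G \<in> C \<longleftrightarrow> models G \<phi>))"
proof -
  have her: "hereditary C" by (rule assms(1))
  have hiso: "H \<in> C" if "G \<in> C" "graph H" "graph_iso f G H" for G H f
    using her that unfolding hereditary_def by blast
  have hind: "H \<in> C" if "G \<in> C" "induced_subgraph H G" for G H
    using her that unfolding hereditary_def by blast
  from assms(2) obtain d m where bd: "\<forall>G\<in>C. verts G \<noteq> {} \<longrightarrow> has_tree_model G d m"
    unfolding bounded_shrubdepth_def by blast
  obtain Bd where Bd: "\<forall>H. mnm C H \<longrightarrow> card (verts H) \<le> Bd" using mnm_bound[OF her bd] by blast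
  obtain Hs where Hs: "set Hs = BS C Bd" using finite_list[OF finite_BS] by blast
  define \<phi> where "\<phi> = conjs (map (\<lambda>H. FNot (psi H (card (verts H)))) Hs)"
  have sent: "sentence \<phi>" unfolding sentence_def \<phi>_def fv_conjs by (simp add: fv_psi)
  have mod: "models G \<phi> \<longleftrightarrow> (\<forall>H\<in>BS C Bd. \<not> embeds H G (card (verts H)))" for G
    unfolding models_def \<phi>_def sat_conjs using Hs by (simp add: sat_psi)
  have main: "G \<in> C \<longleftrightarrow> models G \<phi>" if g: "graph G" for G
  proof
    assume GC: "G \<in> C"
    show "models G \<phi>" unfolding mod
    proof (intro ballI notI)
      fix H assume HB: "H \<in> BS C Bd" and em: "embeds H G (card (verts H))"
      obtain n where H: "graph H" "H \<notin> C" "verts H = {0..<n}" using HB unfolding BS_def by blast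
      have cn: "card (verts H) = n" using H(3) by simp
      obtain f where f1: "\<forall>i<n. f i \<in> verts G"
        and f2: "\<forall>i<n. \<forall>j<n. i \<noteq> j \<longrightarrow> f i \<noteq> f j \<and> (adj G (f i) (f j) \<longleftrightarrow> adj H i j)"
        using em unfolding embeds_def cn by blast
      have inj: "inj_on f {0..<n}"
      proof (rule inj_onI)
        fix x y assume "x \<in> {0..<n}" "y \<in> {0..<n}" "f x = f y"
        then show "x = y" using f2 by (cases "x = y") auto
      qed
      have sub: "f ` {0..<n} \<subseteq> verts G" using f1 by auto
      have adjf: "\<forall>u\<in>{0..<n}. \<forall>v\<in>{0..<n}. adj H u v \<longleftrightarrow> adj G (f u) (f v)"
      proof (intro ballI)
        fix u v assume uv: "u \<in> {0..<n}" "v \<in> {0..<n}"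
        show "adj H u v \<longleftrightarrow> adj G (f u) (f v)"
        proof (cases "u = v")
          case True
          then show ?thesis using graph_adjD[OF H(1)] graph_adjD[OF g] by blast
        next
          case False then show ?thesis using f2 uv by auto
        qed
      qed
      have KC: "isub G (f ` {0..<n}) \<in> C" using hind[OF GC isub_induced[OF sub]] .
      have "graph_iso (the_inv_into {0..<n} f) (isub G (f ` {0..<n})) H"
        by (rule iso_inv[OF inj adjf H(3) sub])
      then have "H \<in> C" using hiso[OF KC H(1)] by blast
      then show False using H(2) by simp
    qed
  next
    assume M: "models G \<phi>"
    show "G \<in> C"
    proof (rule ccontr)
      assume GC: "G \<notin> C"
      define P where "P X \<longleftrightarrow> X \<subseteq> verts G \<and> isub G X \<notin> C" for X
      have "P (verts G)" unfolding P_def using GC isub_self[OF g] by simp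
      then obtain X0 where X0: "P X0" "\<forall>Y. P Y \<longrightarrow> card X0 \<le> card Y"
        using ex_has_least_nat[of P "verts G" card] by blast
      have X0G: "X0 \<subseteq> verts G" using X0(1) unfolding P_def by blast
      have finX0: "finite X0" using finite_subset[OF X0G graph_fin[OF g]] .
      define H0 where "H0 = isub G X0"
      have gH0: "graph H0" unfolding H0_def by (rule graph_isub[OF g X0G])
      have "mnm C H0" unfolding mnm_def
      proof (intro conjI allI impI)
        show "graph H0" by (rule gH0)
        show "H0 \<notin> C" using X0(1) unfolding P_def H0_def by blast
      next
        fix Y assume Y: "Y \<subset> verts H0"
        then have YX: "Y \<subset> X0" unfolding H0_def by simp
        have "isub H0 Y = isub G Y" unfolding H0_def using YX by (simp add: isub_isub)
        moreover have "isub G Y \<in> C"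
        proof (rule ccontr)
          assume "isub G Y \<notin> C"
          then have "P Y" unfolding P_def using YX X0G by blast
          then have "card X0 \<le> card Y" using X0(2) by blast
          moreover have "card Y < card X0" using psubset_card_mono[OF finX0 YX] .
          ultimately show False by simp
        qed
        ultimately show "isub H0 Y \<in> C" by simp
      qed
      then have cX0: "card X0 \<le> Bd" using Bd unfolding H0_def by fastforce
      define n where "n = card X0"
      obtain \<beta> where \<beta>: "bij_betw \<beta> X0 {0..<n}" using ex_bij_betw_finite_nat[OF finX0] n_def by blast
      define \<beta>' where "\<beta>' = the_inv_into X0 \<beta>"
      have b': "bij_betw \<beta>' {0..<n} X0" unfolding \<beta>'_def by (rule bij_betw_the_inv_into[OF \<beta>])
      have b'in: "i < n \<Longrightarrow> \<beta>' i \<in> X0" for i using b' unfolding bij_betw_def by auto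
      have b'inj: "i < n \<Longrightarrow> j < n \<Longrightarrow> i \<noteq> j \<Longrightarrow> \<beta>' i \<noteq> \<beta>' j" for i j
        using b' unfolding bij_betw_def inj_on_def by auto
      define H :: "nat graph" where "H = ({0..<n}, \<lambda>i j. i < n \<and> j < n \<and> adj G (\<beta>' i) (\<beta>' j))"
      have vH: "verts H = {0..<n}" unfolding H_def verts_def by simp
      have aH: "adj H i j \<longleftrightarrow> i < n \<and> j < n \<and> adj G (\<beta>' i) (\<beta>' j)" for i j unfolding H_def adj_def by simp
      have gH: "graph H" unfolding graph_def
      proof (intro conjI)
        show "finite (verts H)" unfolding vH by simp
      next
        show "\<forall>u v. adj H u v \<longrightarrow> u \<in> verts H \<and> v \<in> verts H \<and> u \<noteq> v \<and> adj H v u"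
      proof (intro allI impI)
        fix u v assume a: "adj H u v"
        then have uv: "u < n" "v < n" "adj G (\<beta>' u) (\<beta>' v)" using aH by simp_all
        have "\<beta>' u \<noteq> \<beta>' v" using graph_adjD[OF g uv(3)] by blast
        then have "u \<noteq> v" by blast
        moreover have "adj G (\<beta>' v) (\<beta>' u)" using graph_adjD[OF g uv(3)] by blast
        ultimately show "u \<in> verts H \<and> v \<in> verts H \<and> u \<noteq> v \<and> adj H v u" using uv vH aH by simp
      qed
      qed
      have iso: "graph_iso \<beta>' H H0" unfolding graph_iso_def
      proof (intro conjI ballI)
        show "bij_betw \<beta>' (verts H) (verts H0)" using b' vH unfolding H0_def by simp
      next
        fix i j assume "i \<in> verts H" "j \<in> verts H"
        then have "i < n" "j < n" using vH by auto
        then show "adj H i j \<longleftrightarrow> adj H0 (\<beta>' i) (\<beta>' j)" using aH b'in unfolding H0_def by simp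
      qed
      have "H \<notin> C"
      proof
        assume "H \<in> C"
        then have "H0 \<in> C" using hiso[OF _ gH0 iso] by blast
        then show False using X0(1) unfolding P_def H0_def by blast
      qed
      then have HB: "H \<in> BS C Bd" unfolding BS_def using gH vH cX0 n_def by blast
      have cH: "card (verts H) = n" using vH by simp
      have "embeds H G n" unfolding embeds_def
      proof (intro exI[of _ \<beta>'] conjI allI impI)
        fix i assume "i < n" then show "\<beta>' i \<in> verts G" using b'in X0G by blast
      next
        fix i j assume ij: "i < n" "j < n" "i \<noteq> j"
        show "\<beta>' i \<noteq> \<beta>' j" using b'inj ij by blast
        show "adj G (\<beta>' i) (\<beta>' j) \<longleftrightarrow> adj H i j" using aH ij by simp
      qed
      then show False using M HB cH unfolding mod by blast
    qed
  qed
  show ?thesis using sent main by blast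
qed

end
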